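(* Let $n\ge1$ and let $R$ be a uniformly random subset of $[n]$ (each element included independently with probability $1/2$). Consider any (possibly randomized, adaptive) algorithm which accesses the unknown set $R$ only through subgradient queries: in each query it chooses a permutation $P$ of $[n]$ (depending on its randomness and all previous answers) and receives the vector $g^{R,P}\in\mathbb{R}^n$ with $g^{R,P}_{P_k}=f_R(P[k])-f_R(P[k-1])$ for $k\in[n]$; and which, for every $R\subseteq[n]$, always terminates and outputs $R$ (the unique minimizer of $f_R$). Then the expected number of queries made by the algorithm (over the randomness of $R$ and of the algorithm) is at least $n/4$.
   Context: For a permutation $P=(P_1,\dots,P_n)$ of $[n]=\{1,\dots,n\}$, $P[m]=\{P_1,\dots,P_m\}$ (with $P[0]=\emptyset$). For $R\subseteq[n]$, the function $f_R:2^{[n]}\to\{-1,0,1\}$ is defined by $f_R(S)=-1$ if $S=R$; $f_R(S)=0$ if $S\subsetneq R$ or $R\subsetneq S$; and $f_R(S)=1$ otherwise. The vector $g^{R,P}$ is the Lovász-extension subgradient of $f_R$ at any point whose consistent sorted order is $P$. *)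

theory Defs
  imports "HOL-Probability.Probability"
begin

definition fR :: "nat set \<Rightarrow> nat set \<Rightarrow> real" where
  "fR R S = (if S = R then -1 else if S \<subset> R \<or> R \<subset> S then 0 else 1)"

definition is_perm :: "nat \<Rightarrow> nat list \<Rightarrow> bool" where
  "is_perm n P \<longleftrightarrow> distinct P \<and> set P = {1..n}"

definition pref :: "nat list \<Rightarrow> nat \<Rightarrow> nat set" where
  "pref P m = set (take m P)"

text \<open>The subgradient vector g^{R,P}, a vector indexed by [n] (value 0 outside the
  entries of P): g_{P_k} = f_R(P[k]) - f_R(P[k-1]); here k is the 0-based position,
  so P ! k = P_{k+1} and pref P (k+1) = P[k+1].\<close>
definition gvec :: "nat set \<Rightarrow> nat list \<Rightarrow> nat \<Rightarrow> real" where
  "gvec R P i = (if i \<in> set P then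
       (let k = (THE k. k < length P \<and> P ! k = i) in
          fR R (pref P (Suc k)) - fR R (pref P k)) else 0)"

datatype action = Query "nat list" | Output "nat set"

text \<open>A deterministic adaptive algorithm maps the history of answers received so far
  to its next action. hist A R k = the list of answers after k steps when run against R.\<close>
type_synonym det_alg = "(nat \<Rightarrow> real) list \<Rightarrow> action"

fun hist :: "det_alg \<Rightarrow> nat set \<Rightarrow> nat \<Rightarrow> (nat \<Rightarrow> real) list" where
  "hist A R 0 = []"
| "hist A R (Suc k) = (case A (hist A R k) of
      Query P \<Rightarrow> hist A R k @ [gvec R P]
    | Output S \<Rightarrow> hist A R k)"

definition num_queries :: "det_alg \<Rightarrow> nat set \<Rightarrow> nat" where
  "num_queries A R = (LEAST k. \<exists>S. A (hist A R k) = Output S)"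

definition correct_alg :: "nat \<Rightarrow> det_alg \<Rightarrow> bool" where
  "correct_alg n A \<longleftrightarrow> (\<forall>R. R \<subseteq> {1..n} \<longrightarrow>
      (\<exists>k S. A (hist A R k) = Output S)
    \<and> (\<forall>k P. A (hist A R k) = Query P \<longrightarrow> is_perm n P)
    \<and> (\<forall>k S. A (hist A R k) = Output S \<longrightarrow> S = R))"

end

theory Submission imports Defs begin

lemma take_all_iff:
  "m \<le> length xs \<Longrightarrow> (\<forall>x\<in>set (take m xs). p x) \<longleftrightarrow> m \<le> length (takeWhile p xs)"
proof (induction xs arbitrary: m)
  case Nil then show ?case by simp
next
  case (Cons a xs)
  then show ?case by (cases m) auto
qed

lemma takeWhile_agree:
  "(\<forall>x\<in>set (take (Suc (length (takeWhile p xs))) xs). p x = q x) \<Longrightarrow> takeWhile q xs = takeWhile p xs"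
  by (induction xs) auto

definition aan :: "nat set \<Rightarrow> nat list \<Rightarrow> nat" where
  "aan R P = length (takeWhile (\<lambda>x. x \<in> R) P)"
definition ccn :: "nat set \<Rightarrow> nat list \<Rightarrow> nat" where
  "ccn R P = length (takeWhile (\<lambda>x. x \<notin> R) (rev P))"
definition frt :: "nat set \<Rightarrow> nat list \<Rightarrow> nat set" where
  "frt R P = set (take (Suc (aan R P)) P)"
definition bck :: "nat set \<Rightarrow> nat list \<Rightarrow> nat set" where
  "bck R P = set (take (Suc (ccn R P)) (rev P))"
definition Rev :: "nat set \<Rightarrow> nat list \<Rightarrow> nat set" where
  "Rev R P = frt R P \<union> bck R P"

lemma Rev_sub: "Rev R P \<subseteq> set P"
  unfolding Rev_def frt_def bck_def using set_take_subset by fastforce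

lemma sub_R_iff: "k \<le> length P \<Longrightarrow> set (take k P) \<subseteq> R \<longleftrightarrow> k \<le> aan R P"
  using take_all_iff[of k P "\<lambda>x. x \<in> R"] unfolding aan_def by blast

lemma R_sub_iff:
  assumes "k \<le> length P" "distinct P" "R \<subseteq> set P"
  shows "R \<subseteq> set (take k P) \<longleftrightarrow> length P - ccn R P \<le> k"
proof -
  have sp: "set P = set (take k P) \<union> set (drop k P)"
    by (metis append_take_drop_id set_append)
  have dj: "set (take k P) \<inter> set (drop k P) = {}"
    using assms(2) by (metis append_take_drop_id distinct_append)
  have "R \<subseteq> set (take k P) \<longleftrightarrow> (\<forall>x\<in>set (drop k P). x \<notin> R)"
    using sp dj assms(3) by blast
  also have "set (drop k P) = set (take (length P - k) (rev P))"
    using assms(1) by (simp add: take_rev)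
  also have "(\<forall>x\<in>set (take (length P - k) (rev P)). x \<notin> R) \<longleftrightarrow> length P - k \<le> ccn R P"
    using take_all_iff[of "length P - k" "rev P" "\<lambda>x. x \<notin> R"] unfolding ccn_def by simp
  finally show ?thesis using assms(1) by linarith
qed

lemma agree_aan_ccn:
  assumes "R \<inter> Rev R P = R' \<inter> Rev R P"
  shows "aan R' P = aan R P" "ccn R' P = ccn R P"
proof -
  have "\<forall>x\<in>set (take (Suc (length (takeWhile (\<lambda>x. x\<in>R) P))) P). (x\<in>R) = (x\<in>R')"
    using assms unfolding Rev_def frt_def aan_def by blast
  from takeWhile_agree[OF this] show "aan R' P = aan R P" unfolding aan_def by simp
  have "\<forall>x\<in>set (take (Suc (length (takeWhile (\<lambda>x. x\<notin>R) (rev P)))) (rev P)). (x\<notin>R) = (x\<notin>R')"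
    using assms unfolding Rev_def bck_def ccn_def by blast
  from takeWhile_agree[OF this] show "ccn R' P = ccn R P" unfolding ccn_def by simp
qed

lemma agree_Rev:
  assumes "R \<inter> Rev R P = R' \<inter> Rev R P"
  shows "Rev R' P = Rev R P"
  using agree_aan_ccn[OF assms] unfolding Rev_def frt_def bck_def by simp

lemma fR_alt: "fR R X = (if X \<subseteq> R \<and> R \<subseteq> X then -1 else if X \<subseteq> R \<or> R \<subseteq> X then 0 else 1)"
  unfolding fR_def by auto

lemma agree_gvec:
  assumes "R \<inter> Rev R P = R' \<inter> Rev R P" "distinct P" "R \<subseteq> set P" "R' \<subseteq> set P"
  shows "gvec R P = gvec R' P"
proof -
  have key: "fR R (pref P m) = fR R' (pref P m)" for m
  proof -
    define k where "k = min m (length P)"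
    have pk: "pref P m = set (take k P)" unfolding pref_def k_def
      by (metis min.commute take_take take_all_iff order_refl take_all) 
    have k: "k \<le> length P" unfolding k_def by simp
    show ?thesis unfolding pk fR_alt
      using sub_R_iff[OF k, of R] sub_R_iff[OF k, of R'] R_sub_iff[OF k assms(2) assms(3)]
        R_sub_iff[OF k assms(2) assms(4)] agree_aan_ccn[OF assms(1)] by simp
  qed
  show ?thesis unfolding gvec_def using key by (intro ext) (simp add: Let_def)
qed


fun KK :: "det_alg \<Rightarrow> nat set \<Rightarrow> nat \<Rightarrow> nat set" where
  "KK A R 0 = {}"
| "KK A R (Suc t) = (case A (hist A R t) of Query P \<Rightarrow> KK A R t \<union> Rev R P | Output S \<Rightarrow> KK A R t)"

fun QQ :: "det_alg \<Rightarrow> nat set \<Rightarrow> nat \<Rightarrow> nat" where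
  "QQ A R 0 = 0"
| "QQ A R (Suc t) = (case A (hist A R t) of Query P \<Rightarrow> Suc (QQ A R t) | Output S \<Rightarrow> QQ A R t)"

lemma KK_mono: "KK A R t \<subseteq> KK A R (Suc t)"
  by (auto split: action.split)

lemma perm_set: "is_perm n P \<Longrightarrow> set P = {1..n}" "is_perm n P \<Longrightarrow> distinct P"
  unfolding is_perm_def by auto

lemma lemI:
  assumes c: "correct_alg n A" and R: "R \<subseteq> {1..n}" and R': "R' \<subseteq> {1..n}"
  shows "R \<inter> KK A R t = R' \<inter> KK A R t \<Longrightarrow> hist A R t = hist A R' t \<and> KK A R t = KK A R' t"
proof (induction t)
  case 0 then show ?case by simp
next
  case (Suc t)
  have "R \<inter> KK A R t = R' \<inter> KK A R t" using Suc.prems KK_mono[of A R t] by blast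
  with Suc.IH have ih: "hist A R t = hist A R' t" "KK A R t = KK A R' t" by auto
  show ?case
  proof (cases "A (hist A R t)")
    case (Query P)
    have pp: "is_perm n P" using c R Query unfolding correct_alg_def by blast
    have ag: "R \<inter> Rev R P = R' \<inter> Rev R P" using Suc.prems Query by auto
    have g: "gvec R P = gvec R' P"
      using agree_gvec[OF ag] perm_set[OF pp] R R' by auto
    have rv: "Rev R' P = Rev R P" using agree_Rev[OF ag] .
    show ?thesis using Query ih g rv by simp
  next
    case (Output S)
    then show ?thesis using ih by simp
  qed
qed

lemma KK_sub:
  assumes c: "correct_alg n A" and R: "R \<subseteq> {1..n}"
  shows "KK A R t \<subseteq> {1..n}"
proof (induction t)
  case 0 then show ?case by simp
next
  case (Suc t)
  show ?case
  proof (cases "A (hist A R t)")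
    case (Query P)
    have pp: "is_perm n P" using c R Query unfolding correct_alg_def by blast
    then show ?thesis using Suc Query Rev_sub[of R P] perm_set[OF pp] by auto
  qed (use Suc in auto)
qed

lemma nq_output:
  assumes c: "correct_alg n A" and R: "R \<subseteq> {1..n}"
  shows "\<exists>S. A (hist A R (num_queries A R)) = Output S"
proof -
  have "\<exists>k S. A (hist A R k) = Output S" using c R unfolding correct_alg_def by blast
  then show ?thesis unfolding num_queries_def by (rule LeastI_ex)
qed

lemma nq_query:
  assumes "s < num_queries A R"
  shows "\<exists>P. A (hist A R s) = Query P"
proof -
  have "\<not> (\<exists>S. A (hist A R s) = Output S)"
    using not_less_Least[OF assms[unfolded num_queries_def]] .
  then show ?thesis by (cases "A (hist A R s)") auto
qed

lemma after_output:
  assumes "A (hist A R N) = Output S" "N \<le> m"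
  shows "hist A R m = hist A R N \<and> KK A R m = KK A R N \<and> QQ A R m = QQ A R N"
  using assms(2)
proof (induction m rule: dec_induct)
  case base then show ?case by simp
next
  case (step m) then show ?case using assms(1) by simp
qed

lemma QQ_before: "s \<le> num_queries A R \<Longrightarrow> QQ A R s = s"
proof (induction s)
  case 0 then show ?case by simp
next
  case (Suc s)
  obtain P where "A (hist A R s) = Query P" using nq_query[of s A R] Suc.prems by auto
  then show ?case using Suc by simp
qed

lemma KK_full:
  assumes c: "correct_alg n A" and R: "R \<subseteq> {1..n}"
  shows "KK A R (num_queries A R) = {1..n}"
proof (rule ccontr)
  define N where "N = num_queries A R"
  obtain S where S: "A (hist A R N) = Output S" using nq_output[OF c R] N_def by auto
  assume "KK A R (num_queries A R) \<noteq> {1..n}"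
  then obtain i where i: "i \<in> {1..n}" "i \<notin> KK A R N" using KK_sub[OF c R] N_def by blast
  define R' where "R' = (if i \<in> R then R - {i} else insert i R)"
  have R': "R' \<subseteq> {1..n}" using R i unfolding R'_def by auto
  have "R \<inter> KK A R N = R' \<inter> KK A R N" using i unfolding R'_def by auto
  from lemI[OF c R R' this] have "hist A R N = hist A R' N" by simp
  with S have "A (hist A R' N) = Output S" by simp
  then have "S = R'" using c R' unfolding correct_alg_def by blast
  moreover have "S = R" using c R S unfolding correct_alg_def by blast
  ultimately show False unfolding R'_def by (auto split: if_splits)
qed

lemma final_vals:
  assumes c: "correct_alg n A" and R: "R \<subseteq> {1..n}" and T: "num_queries A R \<le> T"
  shows "KK A R T = {1..n}" "QQ A R T = num_queries A R"
proof -
  obtain S where S: "A (hist A R (num_queries A R)) = Output S" using nq_output[OF c R] by auto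
  show "KK A R T = {1..n}" using after_output[of A R "num_queries A R" S T, OF S T] KK_full[OF c R] by simp
  show "QQ A R T = num_queries A R" using after_output[of A R "num_queries A R" S T, OF S T] QQ_before[of "num_queries A R" A R] by simp
qed


lemma cube_card:
  assumes "finite V" "K \<subseteq> V"
  shows "card {R. R \<subseteq> V \<and> R \<inter> K = S \<inter> K} = 2 ^ card (V - K)"
proof -
  have eq: "{R. R \<subseteq> V \<and> R \<inter> K = S \<inter> K} = (\<lambda>T. T \<union> (S \<inter> K)) ` Pow (V - K)"
  proof (intro set_eqI iffI)
    fix R assume "R \<in> {R. R \<subseteq> V \<and> R \<inter> K = S \<inter> K}"
    then have "R = (R - K) \<union> (S \<inter> K)" "R - K \<in> Pow (V - K)" by auto
    then show "R \<in> (\<lambda>T. T \<union> (S \<inter> K)) ` Pow (V - K)" by blast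
  next
    fix R assume "R \<in> (\<lambda>T. T \<union> (S \<inter> K)) ` Pow (V - K)"
    then show "R \<in> {R. R \<subseteq> V \<and> R \<inter> K = S \<inter> K}" using assms(2) by auto
  qed
  have inj: "inj_on (\<lambda>T. T \<union> (S \<inter> K)) (Pow (V - K))"
  proof (rule inj_onI)
    fix x y assume "x \<in> Pow (V - K)" "y \<in> Pow (V - K)" "x \<union> (S \<inter> K) = y \<union> (S \<inter> K)"
    then show "x = y" by blast
  qed
  show ?thesis unfolding eq card_image[OF inj] using assms by (simp add: card_Pow)
qed

lemma cube_count:
  assumes "finite V" "K \<subseteq> V" "B \<subseteq> V"
  shows "card {R. (R \<subseteq> V \<and> R \<inter> K = S \<inter> K) \<and> B \<subseteq> R} \<le> 2 ^ (card (V - K) - card (B \<inter> (V - K)))"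
proof -
  have sub: "{R. (R \<subseteq> V \<and> R \<inter> K = S \<inter> K) \<and> B \<subseteq> R} \<subseteq>
      (\<lambda>T. T \<union> (S \<inter> K) \<union> (B \<inter> (V - K))) ` Pow (V - K - B)"
  proof
    fix R assume R: "R \<in> {R. (R \<subseteq> V \<and> R \<inter> K = S \<inter> K) \<and> B \<subseteq> R}"
    then have "R = (R - K - B) \<union> (S \<inter> K) \<union> (B \<inter> (V - K))" "R - K - B \<in> Pow (V - K - B)" by auto
    then show "R \<in> (\<lambda>T. T \<union> (S \<inter> K) \<union> (B \<inter> (V - K))) ` Pow (V - K - B)" by blast
  qed
  have "card {R. (R \<subseteq> V \<and> R \<inter> K = S \<inter> K) \<and> B \<subseteq> R} \<le> card ((\<lambda>T. T \<union> (S \<inter> K) \<union> (B \<inter> (V - K))) ` Pow (V - K - B))"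
    by (rule card_mono[OF _ sub]) (use assms in auto)
  also have "\<dots> \<le> card (Pow (V - K - B))" by (rule card_image_le) (use assms in auto)
  also have "\<dots> = 2 ^ card (V - K - B)" using assms by (simp add: card_Pow)
  also have "card (V - K - B) = card (V - K) - card ((V - K) \<inter> B)"
    by (rule card_Diff_subset_Int) (use assms in auto)
  finally show ?thesis by (simp add: Int_commute)
qed

lemma geo_le: "(\<Sum>r<N. (1/2::real) ^ r) = 2 - 2 * (1/2) ^ N"
  by (induction N) auto

lemma geo_set_le:
  assumes "finite S"
  shows "(\<Sum>r\<in>S. (1/2::real) ^ r) \<le> 2"
proof -
  obtain N where "S \<subseteq> {..<N}" using assms finite_nat_bounded by blast
  then have "(\<Sum>r\<in>S. (1/2::real) ^ r) \<le> (\<Sum>r<N. (1/2::real) ^ r)"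
    by (intro sum_mono2) auto
  also have "\<dots> \<le> 2" unfolding geo_le by simp
  finally show ?thesis .
qed

lemma front_lemma:
  assumes d: "distinct P" and K: "K \<subseteq> set P"
  shows "(\<Sum>R\<in>{R. R \<subseteq> set P \<and> R \<inter> K = S \<inter> K}. real (card (frt R P - K)))
          \<le> 2 * real (card {R. R \<subseteq> set P \<and> R \<inter> K = S \<inter> K})"
proof -
  define V where "V = set P"
  define C where "C = {R. R \<subseteq> V \<and> R \<inter> K = S \<inter> K}"
  define J where "J = {j. j < length P \<and> P ! j \<notin> K}"
  define g where "g j = card (set (take j P) \<inter> (V - K))" for j
  have fV: "finite V" unfolding V_def by simp
  have fC: "finite C" unfolding C_def using fV by (simp add: finite_subset)
  have fJ: "finite J" unfolding J_def by simp
  have step1: "card (frt R P - K) \<le> card {j\<in>J. set (take j P) \<subseteq> R}" if "R \<in> C" for R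
  proof -
    have "frt R P - K \<subseteq> (\<lambda>j. P ! j) ` {j\<in>J. set (take j P) \<subseteq> R}"
    proof
      fix x assume x: "x \<in> frt R P - K"
      then obtain j where j: "j < length (take (Suc (aan R P)) P)" "take (Suc (aan R P)) P ! j = x"
        unfolding frt_def by (auto simp: in_set_conv_nth)
      have jl: "j < length P" "j \<le> aan R P" using j(1) by auto
      have "set (take j P) \<subseteq> R" using sub_R_iff[of j P R] jl by simp
      moreover have "P ! j = x" using j by simp
      ultimately show "x \<in> (\<lambda>j. P ! j) ` {j\<in>J. set (take j P) \<subseteq> R}"
        using x jl unfolding J_def by auto
    qed
    then have "card (frt R P - K) \<le> card ((\<lambda>j. P ! j) ` {j\<in>J. set (take j P) \<subseteq> R})"
      by (rule card_mono[rotated]) (use fJ in simp)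
    also have "\<dots> \<le> card {j\<in>J. set (take j P) \<subseteq> R}" by (rule card_image_le) (use fJ in simp)
    finally show ?thesis .
  qed
  have "(\<Sum>R\<in>C. real (card (frt R P - K))) \<le> (\<Sum>R\<in>C. real (card {j\<in>J. set (take j P) \<subseteq> R}))"
    using step1 by (intro sum_mono) simp
  also have "\<dots> = (\<Sum>R\<in>C. \<Sum>j\<in>J. if set (take j P) \<subseteq> R then 1 else 0)"
    using fJ by (simp add: sum.If_cases Int_def)
  also have "\<dots> = (\<Sum>j\<in>J. \<Sum>R\<in>C. if set (take j P) \<subseteq> R then 1 else 0)"
    by (rule sum.swap)
  also have "\<dots> = (\<Sum>j\<in>J. real (card {R\<in>C. set (take j P) \<subseteq> R}))"
    using fC by (simp add: sum.If_cases Int_def)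
  also have "\<dots> \<le> (\<Sum>j\<in>J. real (card C) * (1/2) ^ g j)"
  proof (rule sum_mono)
    fix j assume "j \<in> J"
    have B: "set (take j P) \<subseteq> V" unfolding V_def using set_take_subset by metis
    have c1: "card {R\<in>C. set (take j P) \<subseteq> R} \<le> 2 ^ (card (V - K) - g j)"
      using cube_count[OF fV K[folded V_def] B, of S] unfolding C_def g_def by simp
    have gle: "g j \<le> card (V - K)" unfolding g_def by (rule card_mono) (use fV in auto)
    have "real (card {R\<in>C. set (take j P) \<subseteq> R}) \<le> 2 ^ (card (V - K) - g j)"
      using c1 by (metis of_nat_le_iff of_nat_numeral of_nat_power)
    also have "(2::real) ^ (card (V - K) - g j) = 2 ^ card (V - K) * (1/2) ^ g j"
      using gle by (simp add: power_diff power_one_over)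
    also have "2 ^ card (V - K) = real (card C)"
      using cube_card[OF fV K[folded V_def], of S] unfolding C_def by simp
    finally show "real (card {R\<in>C. set (take j P) \<subseteq> R}) \<le> real (card C) * (1/2) ^ g j" .
  qed
  also have "\<dots> = real (card C) * (\<Sum>j\<in>J. (1/2) ^ g j)" by (simp add: sum_distrib_left)
  also have "(\<Sum>j\<in>J. (1/2::real) ^ g j) = (\<Sum>r\<in>g ` J. (1/2) ^ r)"
  proof -
    have "inj_on g J"
    proof -
      have lt: "g i < g j" if "i \<in> J" "j \<in> J" "i < j" for i j
      proof -
        have "set (take i P) \<inter> (V - K) \<subset> set (take j P) \<inter> (V - K)"
        proof
          show "set (take i P) \<inter> (V - K) \<subseteq> set (take j P) \<inter> (V - K)"
            using set_take_subset_set_take[of i j P] that by auto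
          have m1: "P ! i \<in> set (take j P) \<inter> (V - K)"
          proof -
            have "P ! i \<in> set (take j P)" using that unfolding J_def
              using nth_mem[of i "take j P"] by simp
            moreover have "P ! i \<in> V" using that unfolding J_def V_def by simp
            ultimately show ?thesis using that unfolding J_def by simp
          qed
          have m2: "P ! i \<notin> set (take i P)"
          proof
            assume "P ! i \<in> set (take i P)"
            then obtain k where "k < i" "P ! k = P ! i" using that
              by (auto simp: in_set_conv_nth)
            then show False using d that unfolding J_def by (simp add: nth_eq_iff_index_eq)
          qed
          show "set (take i P) \<inter> (V - K) \<noteq> set (take j P) \<inter> (V - K)" using m1 m2 by blast
        qed
        then show ?thesis unfolding g_def by (rule psubset_card_mono[rotated]) (use fV in auto)
      qed
      show ?thesis
      proof (rule inj_onI)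
        fix i j assume "i \<in> J" "j \<in> J" "g i = g j"
        then show "i = j" using lt[of i j] lt[of j i] by (cases i j rule: linorder_cases) auto
      qed
    qed
    then show ?thesis by (simp add: sum.reindex)
  qed
  also have "real (card C) * (\<Sum>r\<in>g ` J. (1/2::real) ^ r) \<le> real (card C) * 2"
    by (rule mult_left_mono[OF geo_set_le]) (use fJ in auto)
  finally show ?thesis unfolding C_def V_def by simp
qed

lemma bck_frt:
  assumes "R \<subseteq> set P"
  shows "bck R P = frt (set P - R) (rev P)"
proof -
  have "takeWhile (\<lambda>x. x \<notin> R) (rev P) = takeWhile (\<lambda>x. x \<in> set P - R) (rev P)"
    by (rule takeWhile_cong) auto
  then show ?thesis unfolding bck_def frt_def ccn_def aan_def by simp
qed

lemma back_lemma:
  assumes d: "distinct P" and K: "K \<subseteq> set P"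
  shows "(\<Sum>R\<in>{R. R \<subseteq> set P \<and> R \<inter> K = S \<inter> K}. real (card (bck R P - K)))
          \<le> 2 * real (card {R. R \<subseteq> set P \<and> R \<inter> K = S \<inter> K})"
proof -
  define V where "V = set P"
  define C where "C = {R. R \<subseteq> V \<and> R \<inter> K = S \<inter> K}"
  define C' where "C' = {R. R \<subseteq> set (rev P) \<and> R \<inter> K = (V - S) \<inter> K}"
  have img: "C' = (\<lambda>R. V - R) ` C"
  proof (intro set_eqI iffI)
    fix R assume "R \<in> C'"
    then have "R = V - (V - R)" "V - R \<in> C" unfolding C'_def C_def V_def using K by auto
    then show "R \<in> (\<lambda>R. V - R) ` C" by blast
  next
    fix R assume "R \<in> (\<lambda>R. V - R) ` C"
    then show "R \<in> C'" unfolding C'_def C_def V_def using K by auto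
  qed
  have inj: "inj_on (\<lambda>R. V - R) C" unfolding C_def by (rule inj_onI) auto
  have "(\<Sum>R\<in>C. real (card (bck R P - K))) = (\<Sum>R\<in>C. real (card (frt (V - R) (rev P) - K)))"
    using bck_frt unfolding C_def V_def by (intro sum.cong) auto
  also have "\<dots> = (\<Sum>R\<in>C'. real (card (frt R (rev P) - K)))"
    unfolding img by (simp add: sum.reindex[OF inj])
  also have "\<dots> \<le> 2 * real (card C')"
    unfolding C'_def using front_lemma[of "rev P" K "V - S"] d K by simp
  also have "card C' = card C" unfolding img by (rule card_image[OF inj])
  finally show ?thesis unfolding C_def V_def .
qed

lemma Rev_lemma:
  assumes d: "distinct P" and K: "K \<subseteq> set P"
  shows "(\<Sum>R\<in>{R. R \<subseteq> set P \<and> R \<inter> K = S \<inter> K}. real (card (Rev R P - K)))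
          \<le> 4 * real (card {R. R \<subseteq> set P \<and> R \<inter> K = S \<inter> K})"
proof -
  have "(\<Sum>R\<in>{R. R \<subseteq> set P \<and> R \<inter> K = S \<inter> K}. real (card (Rev R P - K)))
     \<le> (\<Sum>R\<in>{R. R \<subseteq> set P \<and> R \<inter> K = S \<inter> K}. real (card (frt R P - K)) + real (card (bck R P - K)))"
  proof (rule sum_mono)
    fix R
    have "Rev R P - K = (frt R P - K) \<union> (bck R P - K)" unfolding Rev_def by blast
    then show "real (card (Rev R P - K)) \<le> real (card (frt R P - K)) + real (card (bck R P - K))"
      using card_Un_le[of "frt R P - K" "bck R P - K"] by simp
  qed
  also have "\<dots> \<le> 4 * real (card {R. R \<subseteq> set P \<and> R \<inter> K = S \<inter> K})"
    using front_lemma[OF d K, of S] back_lemma[OF d K, of S] by (simp add: sum.distrib)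
  finally show ?thesis .
qed


lemma double_count:
  fixes f :: "'a \<Rightarrow> real"
  assumes fin: "finite X" and reflC: "\<And>x. x \<in> X \<Longrightarrow> x \<in> C x" and sub: "\<And>x. x \<in> X \<Longrightarrow> C x \<subseteq> X"
    and cl: "\<And>x y. x \<in> X \<Longrightarrow> y \<in> C x \<Longrightarrow> C y = C x"
  shows "(\<Sum>x\<in>X. f x) = (\<Sum>x\<in>X. (\<Sum>y\<in>C x. f y) / real (card (C x)))"
proof -
  have sym: "y \<in> C x \<longleftrightarrow> x \<in> C y" if "x \<in> X" "y \<in> X" for x y
    using cl reflC that by metis
  have "(\<Sum>x\<in>X. (\<Sum>y\<in>C x. f y) / real (card (C x))) = (\<Sum>x\<in>X. \<Sum>y\<in>C x. f y / real (card (C y)))"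
    using cl by (simp add: sum_divide_distrib)
  also have "\<dots> = (\<Sum>x\<in>X. \<Sum>y\<in>X. if y \<in> C x then f y / real (card (C y)) else 0)"
  proof (rule sum.cong[OF refl])
    fix x assume x: "x \<in> X"
    have "X \<inter> C x = C x" using sub[OF x] by blast
    then show "(\<Sum>y\<in>C x. f y / real (card (C y))) = (\<Sum>y\<in>X. if y \<in> C x then f y / real (card (C y)) else 0)"
      using sum.inter_restrict[OF fin, of "\<lambda>y. f y / real (card (C y))" "C x"] by simp
  qed
  also have "\<dots> = (\<Sum>y\<in>X. \<Sum>x\<in>X. if y \<in> C x then f y / real (card (C y)) else 0)"
    by (rule sum.swap)
  also have "\<dots> = (\<Sum>y\<in>X. \<Sum>x\<in>X. if x \<in> C y then f y / real (card (C y)) else 0)"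
    using sym by (intro sum.cong refl) auto
  also have "\<dots> = (\<Sum>y\<in>X. real (card (C y)) * (f y / real (card (C y))))"
  proof (rule sum.cong[OF refl])
    fix y assume y: "y \<in> X"
    have "X \<inter> C y = C y" using sub[OF y] by blast
    then show "(\<Sum>x\<in>X. if x \<in> C y then f y / real (card (C y)) else 0) = real (card (C y)) * (f y / real (card (C y)))"
      using sum.inter_restrict[OF fin, of "\<lambda>x. f y / real (card (C y))" "C y"] by simp
  qed
  also have "\<dots> = (\<Sum>y\<in>X. f y)"
  proof (intro sum.cong refl)
    fix y assume "y \<in> X"
    have "finite (C y)" using sub[OF \<open>y \<in> X\<close>] fin by (rule finite_subset)
    then have "card (C y) > 0" using reflC[OF \<open>y \<in> X\<close>] card_gt_0_iff by blast
    then show "real (card (C y)) * (f y / real (card (C y))) = f y" by simp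
  qed
  finally show ?thesis by simp
qed

lemma lemM:
  assumes c: "correct_alg n A"
  shows "(\<Sum>R\<in>Pow {1..n}. real (card (KK A R t))) \<le> 4 * (\<Sum>R\<in>Pow {1..n}. real (QQ A R t))"
proof (induction t)
  case 0 then show ?case by simp
next
  case (Suc t)
  define X where "X = Pow {1..n::nat}"
  define K where "K R = KK A R t" for R
  define C where "C R = {R'\<in>X. R' \<inter> K R = R \<inter> K R}" for R
  define E where "E R = (case A (hist A R t) of Query P \<Rightarrow> real (card (Rev R P - K R)) | Output S \<Rightarrow> 0)" for R
  define act where "act R = (case A (hist A R t) of Query P \<Rightarrow> 1 | Output S \<Rightarrow> (0::real))" for R
  have finX: "finite X" unfolding X_def by simp
  have a1: "real (card (KK A R (Suc t))) \<le> real (card (KK A R t)) + E R" for R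
  proof (cases "A (hist A R t)")
    case (Query P)
    have "KK A R t \<union> Rev R P = KK A R t \<union> (Rev R P - KK A R t)" by blast
    then have "card (KK A R t \<union> Rev R P) \<le> card (KK A R t) + card (Rev R P - KK A R t)"
      by (metis card_Un_le)
    then show ?thesis using Query unfolding E_def K_def by simp
  qed (simp add: E_def)
  have a2: "real (QQ A R (Suc t)) = real (QQ A R t) + act R" for R
    by (cases "A (hist A R t)") (simp_all add: act_def)
  have same: "hist A R t = hist A R' t \<and> K R' = K R" if "R \<in> X" "R' \<in> C R" for R R'
    using lemI[OF c, of R R' t] that unfolding C_def X_def K_def by auto
  have reflC: "R \<in> C R" if "R \<in> X" for R using that unfolding C_def by simp
  have sub: "C R \<subseteq> X" for R unfolding C_def by auto
  have cl: "C R' = C R" if "R \<in> X" "R' \<in> C R" for R R'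
    using same[OF that] that unfolding C_def by auto
  have per: "(\<Sum>R'\<in>C R. E R') \<le> 4 * act R * real (card (C R))" if R: "R \<in> X" for R
  proof (cases "A (hist A R t)")
    case (Query P)
    have pp: "is_perm n P" using c R Query unfolding correct_alg_def X_def by blast
    have E': "E R' = real (card (Rev R' P - K R))" if "R' \<in> C R" for R'
      using same[OF R that] Query unfolding E_def by simp
    have CR: "C R = {R'. R' \<subseteq> set P \<and> R' \<inter> K R = R \<inter> K R}"
      unfolding C_def X_def using perm_set[OF pp] by auto
    have Ksub: "K R \<subseteq> set P" using KK_sub[OF c, of R t] R perm_set[OF pp] unfolding K_def X_def by auto
    have "(\<Sum>R'\<in>C R. E R') = (\<Sum>R'\<in>C R. real (card (Rev R' P - K R)))"
      using E' by (rule sum.cong[OF refl])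
    also have "\<dots> \<le> 4 * real (card (C R))"
      unfolding CR by (rule Rev_lemma[OF perm_set(2)[OF pp] Ksub])
    finally show ?thesis using Query unfolding act_def by simp
  next
    case (Output S)
    have "E R' = 0" if "R' \<in> C R" for R'
      using same[OF R that] Output unfolding E_def by simp
    then show ?thesis using Output unfolding act_def by simp
  qed
  have "(\<Sum>R\<in>X. E R) = (\<Sum>R\<in>X. (\<Sum>R'\<in>C R. E R') / real (card (C R)))"
    by (rule double_count[OF finX reflC sub cl])
  also have "\<dots> \<le> (\<Sum>R\<in>X. 4 * act R)"
  proof (rule sum_mono)
    fix R assume R: "R \<in> X"
    have "finite (C R)" using sub finX by (rule finite_subset)
    then have "card (C R) > 0" using reflC[OF R] card_gt_0_iff by blast
    then show "(\<Sum>R'\<in>C R. E R') / real (card (C R)) \<le> 4 * act R"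
      using per[OF R] by (simp add: divide_le_eq)
  qed
  finally have b: "(\<Sum>R\<in>X. E R) \<le> 4 * (\<Sum>R\<in>X. act R)" by (simp add: sum_distrib_left)
  have "(\<Sum>R\<in>X. real (card (KK A R (Suc t)))) \<le> (\<Sum>R\<in>X. real (card (KK A R t)) + E R)"
    by (rule sum_mono) (rule a1)
  also have "\<dots> = (\<Sum>R\<in>X. real (card (KK A R t))) + (\<Sum>R\<in>X. E R)" by (simp add: sum.distrib)
  also have "\<dots> \<le> 4 * (\<Sum>R\<in>X. real (QQ A R t)) + 4 * (\<Sum>R\<in>X. act R)"
    using Suc.IH b unfolding X_def by linarith
  also have "\<dots> = 4 * (\<Sum>R\<in>X. real (QQ A R (Suc t)))"
    unfolding a2 by (simp add: sum.distrib algebra_simps)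
  finally show ?case unfolding X_def .
qed

lemma det_bound:
  assumes c: "correct_alg n A"
  shows "real n * 2 ^ n \<le> 4 * (\<Sum>R\<in>Pow {1..n}. real (num_queries A R))"
proof -
  define T where "T = Max ((\<lambda>R. num_queries A R) ` Pow {1..n})"
  have T: "num_queries A R \<le> T" if "R \<in> Pow {1..n}" for R
    unfolding T_def using that by (intro Max_ge) auto
  have "(\<Sum>R\<in>Pow {1..n}. real (card (KK A R T))) = (\<Sum>R\<in>Pow {1..n::nat}. real n)"
    using final_vals(1)[OF c _ T] by (intro sum.cong refl) auto
  also have "\<dots> = real n * 2 ^ n" by (simp add: card_Pow)
  finally have l: "(\<Sum>R\<in>Pow {1..n}. real (card (KK A R T))) = real n * 2 ^ n" .
  have r: "(\<Sum>R\<in>Pow {1..n}. real (QQ A R T)) = (\<Sum>R\<in>Pow {1..n}. real (num_queries A R))"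
    using final_vals(2)[OF c _ T] by (intro sum.cong refl) auto
  show ?thesis using lemM[OF c, of T] l r by simp
qed


theorem theorem4p4:
  fixes n :: nat and M :: "'w measure" and alg :: "'w \<Rightarrow> det_alg"
  assumes "n \<ge> 1"
    and "prob_space M"
    and "\<And>\<omega>. \<omega> \<in> space M \<Longrightarrow> correct_alg n (alg \<omega>)"
    and "\<And>R. R \<subseteq> {1..n} \<Longrightarrow>
           (\<lambda>\<omega>. num_queries (alg \<omega>) R) \<in> measurable M (count_space UNIV)"
  shows "(\<integral>\<^sup>+ \<omega>. (\<Sum>R\<in>Pow {1..n}. ennreal (real (num_queries (alg \<omega>) R))) / 2 ^ n \<partial>M)
           \<ge> ennreal (real n / 4)"
proof -
  have pw: "ennreal (real n / 4) \<le> (\<Sum>R\<in>Pow {1..n}. ennreal (real (num_queries (alg \<omega>) R))) / 2 ^ n"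
    if w: "\<omega> \<in> space M" for \<omega>
  proof -
    define s where "s = (\<Sum>R\<in>Pow {1..n}. real (num_queries (alg \<omega>) R))"
    have s0: "0 \<le> s" unfolding s_def by (simp add: sum_nonneg)
    have b: "real n * 2 ^ n \<le> 4 * s" using det_bound[OF assms(3)[OF w]] unfolding s_def .
    have "(\<Sum>R\<in>Pow {1..n}. ennreal (real (num_queries (alg \<omega>) R))) / 2 ^ n = ennreal s / ennreal (2 ^ n)"
      unfolding s_def by (simp add: ennreal_power[symmetric])
    also have "\<dots> = ennreal (s / 2 ^ n)" using s0 by (simp add: divide_ennreal)
    finally have eq: "(\<Sum>R\<in>Pow {1..n}. ennreal (real (num_queries (alg \<omega>) R))) / 2 ^ n = ennreal (s / 2 ^ n)" .
    have "real n / 4 \<le> s / 2 ^ n" using b by (simp add: field_simps)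
    then show ?thesis unfolding eq by (rule ennreal_leI)
  qed
  have "ennreal (real n / 4) = (\<integral>\<^sup>+ \<omega>. ennreal (real n / 4) \<partial>M)"
    using prob_space.emeasure_space_1[OF assms(2)] by simp
  also have "\<dots> \<le> (\<integral>\<^sup>+ \<omega>. (\<Sum>R\<in>Pow {1..n}. ennreal (real (num_queries (alg \<omega>) R))) / 2 ^ n \<partial>M)"
    by (rule nn_integral_mono) (rule pw)
  finally show ?thesis .
qed

end
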